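(* Let $(\mathcal{X},d)$ be a finite metric space with initial forest given by a partition $\mathcal{P}=\{P_1,\dots,P_t\}$ of $\mathcal{X}$ and spanning trees $T_i$ on the parts with edge union $E_t$, and let $\gamma=\gamma(\mathcal{P})$ be its overlap parameter. Let $R=\{R_i : i\in[t]\}$ with each $R_i\subseteq P_i$ nonempty, and set $$\alpha = 1+\frac{\mathrm{cost}(\mathcal{P},R)}{w_{\mathcal{X}}(E_t)}.$$ Then the spanning tree $\hat T$ returned by $\textsf{MultiRepMFC}(R)$ satisfies $w_{\mathcal{X}}(\hat T)\le \alpha\, w_{\mathcal{X}}(T^* )$, where $T^*$ is an optimal solution of the Metric Forest Completion problem (i.e. it is an $\alpha$-approximation for MFC), and $w_{\mathcal{X}}(\hat T)\le \alpha\gamma\, w_{\mathcal{X}}(T_{\mathcal{X}})$ where $T_{\mathcal{X}}$ is a minimum spanning tree of $G_{\mathcal{X}}$ (i.e. it is an $(\alpha\gamma)$-approximation for metric MST).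
   Context: $(\mathcal{X},d)$ is a finite metric space, $\mathcal{X}=\{x_1,\dots,x_n\}$, and $G_{\mathcal{X}}$ is the complete graph on $\mathcal{X}$ with edge weights $w_{\mathcal{X}}(u,v)=d(u,v)$; for an edge set $F$, $w_{\mathcal{X}}(F)=\sum_{e\in F}w_{\mathcal{X}}(e)$. For $A,B\subseteq\mathcal{X}$, $d(A,B)=\min_{a\in A,b\in B}d(a,b)$. An initial forest consists of a partition $\mathcal{P}=\{P_1,\dots,P_t\}$ of $\mathcal{X}$ and, for each $i$, a spanning tree $T_i$ of the complete graph on $P_i$; $E_t$ is the union of the edge sets of the $T_i$. The Metric Forest Completion (MFC) problem is: find a minimum-weight spanning tree of $G_{\mathcal{X}}$ whose edge set contains $E_t$. Overlap parameter: let $\mathcal{T}_{\mathcal{X}}$ be the set of minimum spanning trees of $G_{\mathcal{X}}$ and for $T\in\mathcal{T}_{\mathcal{X}}$ let $T(\mathcal{P})$ be the set of edges of $T$ whose two endpoints lie in the same part of $\mathcal{P}$; then $\gamma(\mathcal{P})=w_{\mathcal{X}}(E_t)/\max_{T\in\mathcal{T}_{\mathcal{X}}}w_{\mathcal{X}}(T(\mathcal{P}))$. Cost: $\mathrm{cost}(P_i,R_i)=\max_{x\in P_i}\min_{r\in R_i}d(x,r)$ and $\mathrm{cost}(\mathcal{P},R)=\sum_{i=1}^t\mathrm{cost}(P_i,R_i)$. Algorithm $\textsf{MultiRepMFC}(R)$: for each pair $i\ne j$ in $[t]$ set $\hat w(v_i,v_j)=\min\{d(P_i,R_j),d(P_j,R_i)\}$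 and record a pair of points $(x,y)$ attaining this minimum; compute a minimum spanning tree $\hat T_{\mathcal{P}}$ of the complete graph on nodes $v_1,\dots,v_t$ with weights $\hat w$; return the spanning tree $\hat T$ of $G_{\mathcal{X}}$ consisting of $E_t$ together with the recorded point pairs corresponding to the edges of $\hat T_{\mathcal{P}}$. *)

theory Defs
  imports Complex_Main
begin

definition metric_on :: "'a set \<Rightarrow> ('a \<Rightarrow> 'a \<Rightarrow> real) \<Rightarrow> bool" where
  "metric_on X d \<longleftrightarrow>
     (\<forall>x\<in>X. \<forall>y\<in>X. d x y = 0 \<longleftrightarrow> x = y) \<and>
     (\<forall>x\<in>X. \<forall>y\<in>X. d x y = d y x) \<and>
     (\<forall>x\<in>X. \<forall>y\<in>X. \<forall>z\<in>X. d x z \<le> d x y + d y z)"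

definition setdist :: "('a \<Rightarrow> 'a \<Rightarrow> real) \<Rightarrow> 'a set \<Rightarrow> 'a set \<Rightarrow> real" where
  "setdist d A B = Min {d a b | a b. a \<in> A \<and> b \<in> B}"

definition edges_on :: "'v set \<Rightarrow> 'v set set \<Rightarrow> bool" where
  "edges_on V F \<longleftrightarrow> (\<forall>e\<in>F. \<exists>u v. u \<in> V \<and> v \<in> V \<and> u \<noteq> v \<and> e = {u, v})"

definition adj :: "'v set set \<Rightarrow> ('v \<times> 'v) set" where
  "adj F = {(x, y). {x, y} \<in> F}"

definition connected_on :: "'v set \<Rightarrow> 'v set set \<Rightarrow> bool" where
  "connected_on V F \<longleftrightarrow> (\<forall>u\<in>V. \<forall>v\<in>V. (u, v) \<in> (adj F)\<^sup>*)"

definition acyclic_edges :: "'v set set \<Rightarrow> bool" where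
  "acyclic_edges F \<longleftrightarrow> (\<forall>e\<in>F. \<forall>u v. e = {u, v} \<longrightarrow> (u, v) \<notin> (adj (F - {e}))\<^sup>*)"

definition spanning_tree :: "'v set \<Rightarrow> 'v set set \<Rightarrow> bool" where
  "spanning_tree V F \<longleftrightarrow> edges_on V F \<and> connected_on V F \<and> acyclic_edges F"

text \<open>Weight of an edge {u,v} of the complete graph with weights c (c symmetric).\<close>
definition edge_weight :: "('v \<Rightarrow> 'v \<Rightarrow> real) \<Rightarrow> 'v set \<Rightarrow> real" where
  "edge_weight c e = (SOME r. \<exists>u v. e = {u, v} \<and> r = c u v)"

definition weight :: "('v \<Rightarrow> 'v \<Rightarrow> real) \<Rightarrow> 'v set set \<Rightarrow> real" where
  "weight c F = (\<Sum>e\<in>F. edge_weight c e)"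

definition is_mst :: "'v set \<Rightarrow> ('v \<Rightarrow> 'v \<Rightarrow> real) \<Rightarrow> 'v set set \<Rightarrow> bool" where
  "is_mst V c F \<longleftrightarrow> spanning_tree V F \<and> (\<forall>F'. spanning_tree V F' \<longrightarrow> weight c F \<le> weight c F')"

definition initial_forest ::
  "'a set \<Rightarrow> nat \<Rightarrow> (nat \<Rightarrow> 'a set) \<Rightarrow> (nat \<Rightarrow> 'a set set) \<Rightarrow> bool" where
  "initial_forest X t P T \<longleftrightarrow>
     (\<forall>i<t. P i \<noteq> {}) \<and>
     (\<forall>i<t. \<forall>j<t. i \<noteq> j \<longrightarrow> P i \<inter> P j = {}) \<and>
     (\<Union>i<t. P i) = X \<and>
     (\<forall>i<t. spanning_tree (P i) (T i))"

definition forest_edges :: "nat \<Rightarrow> (nat \<Rightarrow> 'a set set) \<Rightarrow> 'a set set" where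
  "forest_edges t T = (\<Union>i<t. T i)"

definition mfc_optimal ::
  "'a set \<Rightarrow> ('a \<Rightarrow> 'a \<Rightarrow> real) \<Rightarrow> 'a set set \<Rightarrow> 'a set set \<Rightarrow> bool" where
  "mfc_optimal X d Et F \<longleftrightarrow>
     spanning_tree X F \<and> Et \<subseteq> F \<and>
     (\<forall>F'. spanning_tree X F' \<and> Et \<subseteq> F' \<longrightarrow> weight d F \<le> weight d F')"

definition intra_edges :: "nat \<Rightarrow> (nat \<Rightarrow> 'a set) \<Rightarrow> 'a set set \<Rightarrow> 'a set set" where
  "intra_edges t P F = {e \<in> F. \<exists>i<t. e \<subseteq> P i}"

definition max_intra_mst_weight ::
  "'a set \<Rightarrow> ('a \<Rightarrow> 'a \<Rightarrow> real) \<Rightarrow> nat \<Rightarrow> (nat \<Rightarrow> 'a set) \<Rightarrow> real" where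
  "max_intra_mst_weight X d t P = Max {weight d (intra_edges t P F) | F. is_mst X d F}"

definition overlap_gamma ::
  "'a set \<Rightarrow> ('a \<Rightarrow> 'a \<Rightarrow> real) \<Rightarrow> nat \<Rightarrow> (nat \<Rightarrow> 'a set) \<Rightarrow> (nat \<Rightarrow> 'a set set) \<Rightarrow> real" where
  "overlap_gamma X d t P T = weight d (forest_edges t T) / max_intra_mst_weight X d t P"

definition part_cost :: "('a \<Rightarrow> 'a \<Rightarrow> real) \<Rightarrow> 'a set \<Rightarrow> 'a set \<Rightarrow> real" where
  "part_cost d Pi Ri = Max ((\<lambda>x. Min ((\<lambda>r. d x r) ` Ri)) ` Pi)"

definition total_cost :: "('a \<Rightarrow> 'a \<Rightarrow> real) \<Rightarrow> nat \<Rightarrow> (nat \<Rightarrow> 'a set) \<Rightarrow> (nat \<Rightarrow> 'a set) \<Rightarrow> real" where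
  "total_cost d t P R = (\<Sum>i<t. part_cost d (P i) (R i))"

definition hat_w ::
  "('a \<Rightarrow> 'a \<Rightarrow> real) \<Rightarrow> (nat \<Rightarrow> 'a set) \<Rightarrow> (nat \<Rightarrow> 'a set) \<Rightarrow> nat \<Rightarrow> nat \<Rightarrow> real" where
  "hat_w d P R i j = min (setdist d (P i) (R j)) (setdist d (P j) (R i))"

text \<open>That is a possible output of MultiRepMFC(R) (for some choice of the recorded
  minimizing pairs and of the MST of the contracted graph; ties arbitrary).\<close>
definition multirep_output ::
  "('a \<Rightarrow> 'a \<Rightarrow> real) \<Rightarrow> nat \<Rightarrow> (nat \<Rightarrow> 'a set) \<Rightarrow> (nat \<Rightarrow> 'a set set) \<Rightarrow> (nat \<Rightarrow> 'a set)
     \<Rightarrow> 'a set set \<Rightarrow> bool" where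
  "multirep_output d t P T R That \<longleftrightarrow>
     (\<exists>(pr :: nat set \<Rightarrow> 'a \<times> 'a) (TP :: nat set set).
        (\<forall>i<t. \<forall>j<t. i \<noteq> j \<longrightarrow>
           (let (x, y) = pr {i, j} in
              ((x \<in> P i \<and> y \<in> R j) \<or> (x \<in> P j \<and> y \<in> R i)) \<and> d x y = hat_w d P R i j)) \<and>
        is_mst {..<t} (hat_w d P R) TP \<and>
        That = forest_edges t T \<union> {{fst (pr e), snd (pr e)} | e. e \<in> TP})"

end

theory Submission
  imports Defs
begin

lemma ew_sym:
  assumes "c u v = c v u" shows "edge_weight c {u,v} = c u v"
proof -
  have ex: "\<exists>r. \<exists>u' v'. {u,v} = {u',v'} \<and> r = c u' v'" by blast
  from someI_ex[OF ex] obtain u' v' where "{u,v} = {u',v'}" "edge_weight c {u,v} = c u' v'"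
    unfolding edge_weight_def by blast
  then show ?thesis using assms by (auto simp: doubleton_eq_iff)
qed

lemma edges_finite: "finite V \<Longrightarrow> edges_on V F \<Longrightarrow> finite F"
proof -
  assume "finite V" "edges_on V F"
  then have "F \<subseteq> Pow V" by (auto simp: edges_on_def)
  moreover have "finite (Pow V)" using \<open>finite V\<close> by simp
  ultimately show "finite F" by (rule finite_subset)
qed

lemma edges_on_mono: "edges_on A S \<Longrightarrow> A \<subseteq> B \<Longrightarrow> edges_on B S"
  unfolding edges_on_def by (meson subsetD)

lemma edges_on_Un: "edges_on V A \<Longrightarrow> edges_on V B \<Longrightarrow> edges_on V (A \<union> B)"
  unfolding edges_on_def by (simp add: ball_Un)

lemma edges_on_sub: "edges_on A S \<Longrightarrow> S' \<subseteq> S \<Longrightarrow> edges_on A S'"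
  unfolding edges_on_def by (meson subsetD)

lemma ew_nonneg:
  assumes "\<forall>u\<in>V. \<forall>v\<in>V. 0 \<le> c u v \<and> c u v = c v u" "edges_on V F" "e \<in> F"
  shows "0 \<le> edge_weight c e"
proof -
  obtain u v where "u \<in> V" "v \<in> V" "e = {u,v}" using assms(2,3) unfolding edges_on_def by blast
  then show ?thesis using assms(1) ew_sym[of c u v] by auto
qed

lemma weight_mono:
  assumes "finite H" "S \<subseteq> H" "\<forall>e\<in>H. 0 \<le> edge_weight c e"
  shows "weight c S \<le> weight c H"
  unfolding weight_def using assms by (intro sum_mono2) auto

lemma weight_Un_le:
  assumes "finite A" "finite B" "\<forall>e\<in>A \<union> B. 0 \<le> edge_weight c e"
  shows "weight c (A \<union> B) \<le> weight c A + weight c B"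
proof -
  have "weight c (A \<union> B) = weight c A + weight c B - weight c (A \<inter> B)"
    unfolding weight_def using assms by (simp add: sum_Un)
  moreover have "0 \<le> weight c (A \<inter> B)" unfolding weight_def using assms by (intro sum_nonneg) auto
  ultimately show ?thesis by linarith
qed

lemma adj_sym: "(x,y) \<in> adj F \<Longrightarrow> (y,x) \<in> adj F"
  by (auto simp: adj_def insert_commute)

lemma rtrancl_adj_sym: "(x,y) \<in> (adj F)\<^sup>* \<Longrightarrow> (y,x) \<in> (adj F)\<^sup>*"
proof (induction rule: rtrancl_induct)
  case base then show ?case by simp
next
  case (step y z)
  then show ?case using adj_sym converse_rtrancl_into_rtrancl by metis
qed

lemma adj_mono: "F \<subseteq> F' \<Longrightarrow> adj F \<subseteq> adj F'"
  by (auto simp: adj_def)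

lemma connected_via: "connected_on V F \<Longrightarrow> adj F \<subseteq> (adj F')\<^sup>* \<Longrightarrow> connected_on V F'"
  unfolding connected_on_def using rtrancl_subset_rtrancl by blast

lemma crossing:
  assumes "(a,b) \<in> r\<^sup>*" "a \<in> Q" "b \<notin> Q"
  shows "\<exists>x y. (x,y) \<in> r \<and> x \<in> Q \<and> y \<notin> Q"
  using assms
proof (induction rule: rtrancl_induct)
  case base then show ?case by simp
next
  case (step y z)
  then show ?case by blast
qed

lemma extract_tree:
  assumes "finite H" "edges_on V H" "connected_on V H"
  shows "\<exists>S\<subseteq>H. spanning_tree V S"
proof -
  let ?Q = "\<lambda>S. S \<subseteq> H \<and> connected_on V S"
  have QH: "?Q H" using assms(3) by simp
  obtain S where QS: "?Q S" and mn: "\<And>S'. ?Q S' \<Longrightarrow> card S \<le> card S'"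
    using ex_has_least_nat[of ?Q H card, OF QH] by auto
  have finS: "finite S" using QS assms(1) finite_subset by auto
  have "acyclic_edges S"
    unfolding acyclic_edges_def
  proof (intro ballI allI impI notI)
    fix e u v assume e: "e \<in> S" "e = {u,v}" and p: "(u, v) \<in> (adj (S - {e}))\<^sup>*"
    have pv: "(v, u) \<in> (adj (S - {e}))\<^sup>*" using rtrancl_adj_sym[OF p] .
    have "adj S \<subseteq> (adj (S - {e}))\<^sup>*"
    proof
      fix z assume "z \<in> adj S"
      then obtain x y where z: "z = (x,y)" "{x,y} \<in> S" by (auto simp: adj_def)
      show "z \<in> (adj (S - {e}))\<^sup>*"
      proof (cases "{x,y} = e")
        case True
        then have "(x = u \<and> y = v) \<or> (x = v \<and> y = u)" using e by (auto simp: doubleton_eq_iff)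
        then show ?thesis using p pv z by auto
      next
        case False
        then have "(x,y) \<in> adj (S - {e})" using z by (auto simp: adj_def)
        then show ?thesis using z by auto
      qed
    qed
    then have "connected_on V (S - {e})" using QS connected_via by auto
    then have "card S \<le> card (S - {e})" using QS by (intro mn) auto
    moreover have "card (S - {e}) < card S" using finS e(1) by (rule card_Diff1_less)
    ultimately show False by linarith
  qed
  moreover have "edges_on V S" using edges_on_sub[OF assms(2)] QS by auto
  ultimately show ?thesis using QS unfolding spanning_tree_def by auto
qed

lemma hat_sym: "hat_w d P R i j = hat_w d P R j i"
  by (simp add: hat_w_def min.commute)

lemma setdist_set: "{d a b | a b. a \<in> A \<and> b \<in> B} = (\<lambda>(a,b). d a b) ` (A \<times> B)"
  by force

locale mfc_setting =
  fixes X :: "'a set" and d :: "'a \<Rightarrow> 'a \<Rightarrow> real" and t :: nat and P :: "nat \<Rightarrow> 'a set"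
    and T :: "nat \<Rightarrow> 'a set set" and R :: "nat \<Rightarrow> 'a set"
  assumes finX: "finite X" and met: "metric_on X d" and IF: "initial_forest X t P T"
    and Rs: "\<forall>i<t. R i \<subseteq> P i \<and> R i \<noteq> {}"
begin

lemma dsym: "x \<in> X \<Longrightarrow> y \<in> X \<Longrightarrow> d x y = d y x"
  using met unfolding metric_on_def by blast

lemma d0: "x \<in> X \<Longrightarrow> d x x = 0"
  using met unfolding metric_on_def by blast

lemma tri: "x \<in> X \<Longrightarrow> y \<in> X \<Longrightarrow> z \<in> X \<Longrightarrow> d x z \<le> d x y + d y z"
  using met unfolding metric_on_def by blast

lemma dnn: "x \<in> X \<Longrightarrow> y \<in> X \<Longrightarrow> 0 \<le> d x y"
  using tri[of x y x] d0[of x] dsym[of x y] by linarith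

lemma PX: "i < t \<Longrightarrow> P i \<subseteq> X"
  using IF unfolding initial_forest_def by blast

lemma Pne: "i < t \<Longrightarrow> P i \<noteq> {}"
  using IF unfolding initial_forest_def by blast

lemma finP: "i < t \<Longrightarrow> finite (P i)"
  using PX finX finite_subset by blast

lemma RP: "i < t \<Longrightarrow> R i \<subseteq> P i" using Rs by blast
lemma Rne: "i < t \<Longrightarrow> R i \<noteq> {}" using Rs by blast
lemma finR: "i < t \<Longrightarrow> finite (R i)" using RP finP finite_subset by blast

lemma Pdisj: "i < t \<Longrightarrow> j < t \<Longrightarrow> x \<in> P i \<Longrightarrow> x \<in> P j \<Longrightarrow> i = j"
  using IF unfolding initial_forest_def by blast

lemma Pcover: "x \<in> X \<Longrightarrow> \<exists>i<t. x \<in> P i"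
  using IF unfolding initial_forest_def by blast

lemma Tsp: "i < t \<Longrightarrow> spanning_tree (P i) (T i)"
  using IF unfolding initial_forest_def by blast

lemma setdist_le:
  assumes "finite A" "finite B" "a \<in> A" "b \<in> B"
  shows "setdist d A B \<le> d a b"
  unfolding setdist_def setdist_set using assms by (intro Min_le) auto

lemma setdist_nn:
  assumes "finite A" "finite B" "A \<noteq> {}" "B \<noteq> {}" "A \<subseteq> X" "B \<subseteq> X"
  shows "0 \<le> setdist d A B"
  unfolding setdist_def setdist_set using assms dnn by (subst Min_ge_iff) auto

lemma hat_nn: "i < t \<Longrightarrow> j < t \<Longrightarrow> 0 \<le> hat_w d P R i j"
proof -
  assume i: "i < t" and j: "j < t"
  have a: "0 \<le> setdist d (P i) (R j)"
    using finP[OF i] finR[OF j] Pne[OF i] Rne[OF j] PX[OF i] RP[OF j] PX[OF j]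
    by (intro setdist_nn) auto
  have b: "0 \<le> setdist d (P j) (R i)"
    using finP[OF j] finR[OF i] Pne[OF j] Rne[OF i] PX[OF j] RP[OF i] PX[OF i]
    by (intro setdist_nn) auto
  show ?thesis unfolding hat_w_def using a b by simp
qed

lemma cost_nn: "i < t \<Longrightarrow> 0 \<le> part_cost d (P i) (R i)"
proof -
  assume i: "i < t"
  obtain x where x: "x \<in> P i" using Pne[OF i] by blast
  have xX: "x \<in> X" using x PX[OF i] by auto
  have "\<forall>a\<in>(\<lambda>r. d x r) ` R i. 0 \<le> a"
  proof
    fix a assume "a \<in> (\<lambda>r. d x r) ` R i"
    then obtain r where "r \<in> R i" "a = d x r" by auto
    then have "r \<in> X" using RP[OF i] PX[OF i] by auto
    then show "0 \<le> a" using \<open>a = d x r\<close> dnn[OF xX] by simp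
  qed
  then have "0 \<le> Min ((\<lambda>r. d x r) ` R i)"
    using finR[OF i] Rne[OF i] by (subst Min_ge_iff) auto
  also have "\<dots> \<le> part_cost d (P i) (R i)"
    unfolding part_cost_def using finP[OF i] x by (intro Max_ge) auto
  finally show ?thesis .
qed

lemma key:
  assumes "i < t" "j < t" "x \<in> P i" "y \<in> P j"
  shows "hat_w d P R i j \<le> d x y + part_cost d (P j) (R j)"
proof -
  have "Min ((\<lambda>r. d y r) ` R j) \<in> (\<lambda>r. d y r) ` R j"
    using finR Rne assms by (intro Min_in) auto
  then obtain r where r: "r \<in> R j" "d y r = Min ((\<lambda>r. d y r) ` R j)" by auto
  have rX: "r \<in> X" "x \<in> X" "y \<in> X" using r(1) RP[OF assms(2)] PX[OF assms(2)] PX[OF assms(1)] assms(3,4) by auto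
  have "hat_w d P R i j \<le> setdist d (P i) (R j)" unfolding hat_w_def by simp
  also have "\<dots> \<le> d x r" by (rule setdist_le[OF finP[OF assms(1)] finR[OF assms(2)] assms(3) r(1)])
  also have "\<dots> \<le> d x y + d y r" by (rule tri[OF rX(2) rX(3) rX(1)])
  also have "d y r \<le> part_cost d (P j) (R j)"
    unfolding part_cost_def r(2) using finP assms by (intro Max_ge) auto
  finally show ?thesis by linarith
qed

lemma prim:
  assumes Hed: "edges_on X H" and Hc: "connected_on X H" and k: "Suc k \<le> t"
  shows "\<exists>A S G. A \<subseteq> {..<t} \<and> card A = Suc k \<and> edges_on A S \<and> connected_on A S
      \<and> G \<subseteq> H - intra_edges t P H \<and> (\<forall>e\<in>G. e \<subseteq> (\<Union>i\<in>A. P i))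
      \<and> weight (hat_w d P R) S \<le> weight d G + (\<Sum>i\<in>A. part_cost d (P i) (R i))"
  using k
proof (induction k)
  case 0
  have "connected_on {0} {}" unfolding connected_on_def by simp
  moreover have "edges_on {0} {}" unfolding edges_on_def by simp
  moreover have "weight (hat_w d P R) {} \<le> weight d {} + (\<Sum>i\<in>{0}. part_cost d (P i) (R i))"
    using cost_nn[of 0] 0 by (simp add: weight_def)
  moreover have "{0} \<subseteq> {..<t}" using 0 by auto
  moreover have "({}::'a set set) \<subseteq> H - intra_edges t P H" by simp
  moreover have "\<forall>e\<in>({}::'a set set). e \<subseteq> (\<Union>i\<in>{0}. P i)" by simp
  moreover have "card {0::nat} = Suc 0" by simp
  ultimately show ?case
    apply (rule_tac exI[of _ "{0}"])
    apply (rule_tac exI[of _ "{}"])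
    apply (rule_tac exI[of _ "{}"])
    by (intro conjI)
next
  case (Suc k)
  then obtain A S G where A: "A \<subseteq> {..<t}" "card A = Suc k" and S: "edges_on A S" "connected_on A S"
    and G: "G \<subseteq> H - intra_edges t P H" "\<forall>e\<in>G. e \<subseteq> (\<Union>i\<in>A. P i)"
    and W: "weight (hat_w d P R) S \<le> weight d G + (\<Sum>i\<in>A. part_cost d (P i) (R i))"
    by auto
  have finA: "finite A" using A(1) finite_subset by blast
  have "A \<noteq> {..<t}" using A(2) Suc.prems by auto
  then obtain j0 where j0: "j0 < t" "j0 \<notin> A" using A(1) by blast
  obtain i0 where i0: "i0 \<in> A" using A(2) by (metis card.empty ex_in_conv nat.distinct(1))
  have i0t: "i0 < t" using i0 A(1) by blast
  obtain a where a: "a \<in> P i0" using Pne[OF i0t] by blast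
  obtain b where b: "b \<in> P j0" using Pne[OF j0(1)] by blast
  have "a \<in> X" "b \<in> X" using a b PX i0t j0 by blast+
  then have ab: "(a,b) \<in> (adj H)\<^sup>*" using Hc unfolding connected_on_def by blast
  have aD: "a \<in> (\<Union>i\<in>A. P i)" using a i0 by blast
  have bD: "b \<notin> (\<Union>i\<in>A. P i)"
  proof
    assume "b \<in> (\<Union>i\<in>A. P i)"
    then obtain i where "i \<in> A" "b \<in> P i" by blast
    then show False using Pdisj[of i j0 b] A(1) j0 b by blast
  qed
  obtain x y where xy: "(x,y) \<in> adj H" "x \<in> (\<Union>i\<in>A. P i)" "y \<notin> (\<Union>i\<in>A. P i)"
    using crossing[OF ab aD bD] by blast
  have fH: "{x,y} \<in> H" using xy(1) by (simp add: adj_def)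
  have xyX: "x \<in> X" "y \<in> X" using fH Hed unfolding edges_on_def by (auto simp: doubleton_eq_iff)
  obtain i where i: "i \<in> A" "x \<in> P i" using xy(2) by blast
  obtain j where j: "j < t" "y \<in> P j" using Pcover xyX by blast
  have jA: "j \<notin> A" using j xy(3) by blast
  have it: "i < t" using i A(1) by blast
  have ij: "i \<noteq> j" using i jA by blast
  have f_notin: "{x,y} \<notin> intra_edges t P H"
  proof
    assume "{x,y} \<in> intra_edges t P H"
    then obtain l where "l < t" "{x,y} \<subseteq> P l" unfolding intra_edges_def by blast
    then show False using Pdisj[of l i x] Pdisj[of l j y] it j i ij by auto
  qed
  have fG: "{x,y} \<notin> G" using G(2) xy(3) by blast
  have ijS: "{i,j} \<notin> S"
  proof
    assume "{i,j} \<in> S"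
    then obtain p q where "p \<in> A" "q \<in> A" "{i,j} = {p,q}" using S(1) unfolding edges_on_def by blast
    then show False using jA by (auto simp: doubleton_eq_iff)
  qed
  have finS: "finite S" using edges_finite[OF finA S(1)] .
  have finG: "finite G" using G(1) edges_finite[OF finX Hed] finite_subset by blast
  let ?A = "insert j A" and ?S = "insert {i,j} S" and ?G = "insert {x,y} G"
  have c1: "?A \<subseteq> {..<t}" using A(1) j by auto
  have c2: "card ?A = Suc (Suc k)" using A(2) finA jA by simp
  have c3: "edges_on ?A ?S" unfolding edges_on_def
  proof
    fix e assume "e \<in> ?S"
    then consider "e = {i,j}" | "e \<in> S" by auto
    then show "\<exists>u v. u \<in> ?A \<and> v \<in> ?A \<and> u \<noteq> v \<and> e = {u,v}"
    proof cases
      case 1 then show ?thesis using i ij by (intro exI[of _ i] exI[of _ j]) auto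
    next
      case 2 then obtain u v where "u \<in> A" "v \<in> A" "u \<noteq> v" "e = {u,v}"
        using S(1) unfolding edges_on_def by meson
      then show ?thesis by (intro exI[of _ u] exI[of _ v]) auto
    qed
  qed
  have c4: "connected_on ?A ?S"
    unfolding connected_on_def
  proof (intro ballI)
    fix u v assume u: "u \<in> ?A" and v: "v \<in> ?A"
    have mono: "(adj S)\<^sup>* \<subseteq> (adj ?S)\<^sup>*" by (rule rtrancl_mono[OF adj_mono[OF subset_insertI]])
    have e1: "(i,j) \<in> adj ?S" "(j,i) \<in> adj ?S" unfolding adj_def by (simp_all add: insert_commute)
    have toi: "(w,i) \<in> (adj ?S)\<^sup>*" if w: "w \<in> ?A" for w
    proof (cases "w = j")
      case True then show ?thesis using e1(2) by simp
    next
      case False then have wA: "w \<in> A" using w by simp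
      have "(w,i) \<in> (adj S)\<^sup>*" using S(2) wA i(1) unfolding connected_on_def by simp
      then show ?thesis by (rule subsetD[OF mono])
    qed
    have fromi: "(i,w) \<in> (adj ?S)\<^sup>*" if "w \<in> ?A" for w
      by (rule rtrancl_adj_sym[OF toi[OF that]])
    show "(u,v) \<in> (adj ?S)\<^sup>*" by (rule rtrancl_trans[OF toi[OF u] fromi[OF v]])
  qed
  have c5: "?G \<subseteq> H - intra_edges t P H" using G(1) fH f_notin by blast
  have c6: "\<forall>e\<in>?G. e \<subseteq> (\<Union>i\<in>?A. P i)"
  proof
    fix e assume "e \<in> ?G"
    then consider "e = {x,y}" | "e \<in> G" by auto
    then show "e \<subseteq> (\<Union>i\<in>?A. P i)"
    proof cases
      case 1
      have "x \<in> (\<Union>i\<in>?A. P i)" using i by auto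
      moreover have "y \<in> (\<Union>i\<in>?A. P i)" using j by auto
      ultimately show ?thesis using 1 by simp
    next
      case 2
      then have "e \<subseteq> (\<Union>i\<in>A. P i)" using G(2) by simp
      then show ?thesis by auto
    qed
  qed
  have "weight (hat_w d P R) ?S = hat_w d P R i j + weight (hat_w d P R) S"
    unfolding weight_def using finS ijS ew_sym[of "hat_w d P R" i j, OF hat_sym[of d P R i j]] by simp
  moreover have "weight d ?G = d x y + weight d G"
    unfolding weight_def using finG fG ew_sym[of d x y, OF dsym[OF xyX]] by simp
  moreover have "(\<Sum>i\<in>?A. part_cost d (P i) (R i)) = part_cost d (P j) (R j) + (\<Sum>i\<in>A. part_cost d (P i) (R i))"
    using finA jA by simp
  moreover have "hat_w d P R i j \<le> d x y + part_cost d (P j) (R j)"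
    using key[OF it j(1) i(2) j(2)] .
  ultimately have c7: "weight (hat_w d P R) ?S \<le> weight d ?G + (\<Sum>i\<in>?A. part_cost d (P i) (R i))"
    using W by linarith
  show ?case
    apply (rule exI[of _ ?A])
    apply (rule exI[of _ ?S])
    apply (rule exI[of _ ?G])
    by (intro conjI c1 c2 c3 c4 c5 c6 c7)
qed

lemma hat_bound:
  assumes tp: "0 < t" and Hed: "edges_on X H" and Hc: "connected_on X H"
    and mst: "is_mst {..<t} (hat_w d P R) TP"
  shows "weight (hat_w d P R) TP \<le> weight d (H - intra_edges t P H) + total_cost d t P R"
proof -
  obtain A S G where A: "A \<subseteq> {..<t}" "card A = Suc (t - 1)" and S: "edges_on A S" "connected_on A S"
    and G: "G \<subseteq> H - intra_edges t P H"
    and W: "weight (hat_w d P R) S \<le> weight d G + (\<Sum>i\<in>A. part_cost d (P i) (R i))"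
    using prim[OF Hed Hc, of "t - 1"] tp by auto
  have AA: "A = {..<t}" using A tp by (intro card_subset_eq) auto
  have hnn: "\<forall>u\<in>{..<t}. \<forall>v\<in>{..<t}. 0 \<le> hat_w d P R u v \<and> hat_w d P R u v = hat_w d P R v u"
    using hat_nn hat_sym by auto
  have dnn': "\<forall>u\<in>X. \<forall>v\<in>X. 0 \<le> d u v \<and> d u v = d v u" using dnn dsym by auto
  have finS: "finite S" using edges_finite[OF _ S(1)] AA by simp
  obtain S0 where S0: "S0 \<subseteq> S" "spanning_tree {..<t} S0"
    using extract_tree[OF finS] S AA by blast
  have "weight (hat_w d P R) TP \<le> weight (hat_w d P R) S0" using mst S0 unfolding is_mst_def by blast
  also have "\<dots> \<le> weight (hat_w d P R) S"
    using weight_mono[OF finS S0(1)] ew_nonneg[OF hnn] S AA by blast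
  also have "\<dots> \<le> weight d G + total_cost d t P R" using W AA by (simp add: total_cost_def)
  also have "weight d G \<le> weight d (H - intra_edges t P H)"
  proof -
    have "finite (H - intra_edges t P H)" using edges_finite[OF finX Hed] by simp
    moreover have "edges_on X (H - intra_edges t P H)" using edges_on_sub[OF Hed] by blast
    ultimately show ?thesis using weight_mono G ew_nonneg[OF dnn'] by blast
  qed
  finally show ?thesis by linarith
qed

lemma forest_edges_on: "edges_on X (forest_edges t T)"
  unfolding edges_on_def
proof
  fix e assume "e \<in> forest_edges t T"
  then obtain i where i: "i < t" "e \<in> T i" unfolding forest_edges_def by auto
  then obtain u v where "u \<in> P i" "v \<in> P i" "u \<noteq> v" "e = {u,v}"
    using Tsp[OF i(1)] unfolding spanning_tree_def edges_on_def by meson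
  moreover have "P i \<subseteq> X" by (rule PX[OF i(1)])
  ultimately show "\<exists>u v. u \<in> X \<and> v \<in> X \<and> u \<noteq> v \<and> e = {u,v}" by auto
qed

lemma that_bound:
  assumes "multirep_output d t P T R That"
  shows "\<exists>TP. is_mst {..<t} (hat_w d P R) TP \<and>
           weight d That \<le> weight d (forest_edges t T) + weight (hat_w d P R) TP"
proof -
  obtain pr TP where pr: "\<forall>i<t. \<forall>j<t. i \<noteq> j \<longrightarrow>
           (let (x, y) = pr {i, j} in
              ((x \<in> P i \<and> y \<in> R j) \<or> (x \<in> P j \<and> y \<in> R i)) \<and> d x y = hat_w d P R i j)"
    and mst: "is_mst {..<t} (hat_w d P R) TP"
    and Th: "That = forest_edges t T \<union> {{fst (pr e), snd (pr e)} | e. e \<in> TP}"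
    using assms unfolding multirep_output_def by auto
  have pr': "fst (pr {i,j}) \<in> X \<and> snd (pr {i,j}) \<in> X \<and> d (fst (pr {i,j})) (snd (pr {i,j})) = hat_w d P R i j"
    if ij: "i < t" "j < t" "i \<noteq> j" for i j
  proof -
    have h: "((fst (pr {i,j}) \<in> P i \<and> snd (pr {i,j}) \<in> R j) \<or> (fst (pr {i,j}) \<in> P j \<and> snd (pr {i,j}) \<in> R i))
       \<and> d (fst (pr {i,j})) (snd (pr {i,j})) = hat_w d P R i j"
      using pr ij by (simp add: Let_def split_beta)
    have s: "P i \<subseteq> X" "P j \<subseteq> X" "R i \<subseteq> P i" "R j \<subseteq> P j"
      using PX[OF ij(1)] PX[OF ij(2)] RP[OF ij(1)] RP[OF ij(2)] by auto
    from h s show ?thesis by auto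
  qed
  let ?f = "\<lambda>e. {fst (pr e), snd (pr e)}"
  have Th': "That = forest_edges t T \<union> ?f ` TP" using Th by (simp add: Setcompr_eq_image)
  have TPe: "edges_on {..<t} TP" using mst unfolding is_mst_def spanning_tree_def by simp
  have finTP: "finite TP" using edges_finite[OF _ TPe] by simp
  have fe: "fst (pr e) \<in> X \<and> snd (pr e) \<in> X \<and> edge_weight d (?f e) = edge_weight (hat_w d P R) e"
    if e: "e \<in> TP" for e
  proof -
    obtain i j where ij: "i \<in> {..<t}" "j \<in> {..<t}" "i \<noteq> j" "e = {i,j}"
      using TPe e unfolding edges_on_def by meson
    have ij': "i < t" "j < t" using ij(1,2) by auto
    have e1: "edge_weight (hat_w d P R) e = hat_w d P R i j"
      unfolding ij(4) by (rule ew_sym[of "hat_w d P R" i j, OF hat_sym])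
    have p: "fst (pr e) \<in> X" "snd (pr e) \<in> X" "d (fst (pr e)) (snd (pr e)) = hat_w d P R i j"
      using pr'[OF ij' ij(3)] ij(4) by auto
    have "edge_weight d (?f e) = d (fst (pr e)) (snd (pr e))"
      by (rule ew_sym[of d "fst (pr e)" "snd (pr e)", OF dsym[OF p(1) p(2)]])
    then show ?thesis using p e1 by simp
  qed
  have Ete: "edges_on X (forest_edges t T)" by (rule forest_edges_on)
  have finEt: "finite (forest_edges t T)" using edges_finite[OF finX Ete] .
  have dnn': "\<forall>u\<in>X. \<forall>v\<in>X. 0 \<le> d u v \<and> d u v = d v u" using dnn dsym by auto
  have nn: "\<forall>e\<in>forest_edges t T \<union> ?f ` TP. 0 \<le> edge_weight d e"
  proof
    fix e assume "e \<in> forest_edges t T \<union> ?f ` TP"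
    then show "0 \<le> edge_weight d e"
    proof
      assume "e \<in> forest_edges t T" then show ?thesis by (rule ew_nonneg[OF dnn' Ete])
    next
      assume "e \<in> ?f ` TP"
      then obtain e' where e': "e' \<in> TP" "e = ?f e'" by auto
      have "edge_weight d e = d (fst (pr e')) (snd (pr e'))"
        unfolding e'(2) using fe[OF e'(1)] by (intro ew_sym dsym) auto
      moreover have "0 \<le> d (fst (pr e')) (snd (pr e'))" using fe[OF e'(1)] by (intro dnn) auto
      ultimately show ?thesis by simp
    qed
  qed
  have finIm: "finite (?f ` TP)" using finTP by simp
  have "weight d That \<le> weight d (forest_edges t T) + weight d (?f ` TP)"
    unfolding Th' by (rule weight_Un_le[OF finEt finIm nn])
  also have "weight d (?f ` TP) \<le> weight (hat_w d P R) TP"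
  proof -
    have "weight d (?f ` TP) \<le> sum (edge_weight d \<circ> ?f) TP"
      unfolding weight_def using nn by (intro sum_image_le finTP) auto
    also have "\<dots> = weight (hat_w d P R) TP" unfolding weight_def using fe by (intro sum.cong) auto
    finally show ?thesis .
  qed
  finally show ?thesis using mst by auto
qed

end


theorem theorem1:
  fixes X :: "'a set" and d :: "'a \<Rightarrow> 'a \<Rightarrow> real"
    and t :: nat and P :: "nat \<Rightarrow> 'a set" and T :: "nat \<Rightarrow> 'a set set"
    and R :: "nat \<Rightarrow> 'a set" and That Tstar TX :: "'a set set"
  assumes "finite X" and "metric_on X d"
    and "initial_forest X t P T"
    and "weight d (forest_edges t T) > 0"
    and "\<forall>i<t. R i \<subseteq> P i \<and> R i \<noteq> {}"
    and "multirep_output d t P T R That"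
    and "mfc_optimal X d (forest_edges t T) Tstar"
    and "is_mst X d TX"
  shows "weight d That
           \<le> (1 + total_cost d t P R / weight d (forest_edges t T)) * weight d Tstar
         \<and> (max_intra_mst_weight X d t P > 0 \<longrightarrow>
         weight d That
           \<le> (1 + total_cost d t P R / weight d (forest_edges t T))
              * overlap_gamma X d t P T * weight d TX)"
proof -
  interpret mfc_setting X d t P T R using assms(1,2,3,5) by unfold_locales
  let ?Et = "forest_edges t T"
  define E where "E = weight d ?Et"
  define C where "C = total_cost d t P R"
  have Epos: "E > 0" using assms(4) E_def by simp
  have tp: "0 < t"
  proof (rule ccontr)
    assume "\<not> 0 < t" then have "?Et = {}" by (simp add: forest_edges_def)
    then show False using Epos E_def by (simp add: weight_def)
  qed
  have Cnn: "0 \<le> C" unfolding C_def total_cost_def using cost_nn by (intro sum_nonneg) auto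
  have dnn': "\<forall>u\<in>X. \<forall>v\<in>X. 0 \<le> d u v \<and> d u v = d v u" using dnn dsym by auto
  have Ete: "edges_on X ?Et" by (rule forest_edges_on)
  have finEt: "finite ?Et" using edges_finite[OF finX Ete] .
  have Et_intra: "?Et \<subseteq> intra_edges t P F" if "?Et \<subseteq> F" for F
  proof
    fix e assume e: "e \<in> ?Et"
    then obtain i where i: "i < t" "e \<in> T i" unfolding forest_edges_def by blast
    then obtain u v where "u \<in> P i" "v \<in> P i" "e = {u,v}"
      using Tsp[OF i(1)] unfolding spanning_tree_def edges_on_def by meson
    then have "e \<subseteq> P i" by simp
    moreover have "e \<in> F" using e that by (rule subsetD[rotated])
    ultimately show "e \<in> intra_edges t P F" using i(1) unfolding intra_edges_def by auto
  qed
  obtain TP where mst: "is_mst {..<t} (hat_w d P R) TP"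
    and wT: "weight d That \<le> E + weight (hat_w d P R) TP"
    using that_bound[OF assms(6)] E_def by blast
  have tree_facts: "finite F \<and> (\<forall>e\<in>F. 0 \<le> edge_weight d e)" if "edges_on X F" for F
    using edges_finite[OF finX that] ew_nonneg[OF dnn' that] by blast
  have opt: "spanning_tree X Tstar" "?Et \<subseteq> Tstar" using assms(7) unfolding mfc_optimal_def by auto
  have Ts: "edges_on X Tstar" "connected_on X Tstar" using opt(1) unfolding spanning_tree_def by auto
  have finTs: "finite Tstar" and nnTs: "\<forall>e\<in>Tstar. 0 \<le> edge_weight d e" using tree_facts[OF Ts(1)] by auto
  have p1: "weight d That \<le> weight d Tstar + C"
  proof -
    have "weight (hat_w d P R) TP \<le> weight d (Tstar - intra_edges t P Tstar) + C"
      using hat_bound[OF tp Ts mst] C_def by simp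
    also have "weight d (Tstar - intra_edges t P Tstar) \<le> weight d (Tstar - ?Et)"
      using Et_intra[OF opt(2)] finTs nnTs by (intro weight_mono) auto
    also have "weight d (Tstar - ?Et) = weight d Tstar - E"
      unfolding weight_def E_def using finTs opt(2) by (simp add: sum_diff)
    finally show ?thesis using wT by linarith
  qed
  have EW: "E \<le> weight d Tstar" unfolding E_def using weight_mono[OF finTs opt(2) nnTs] .
  have part1: "weight d That \<le> (1 + C / E) * weight d Tstar"
  proof -
    have "1 \<le> weight d Tstar / E" using EW Epos by simp
    then have "C * 1 \<le> C * (weight d Tstar / E)" using Cnn by (intro mult_left_mono) auto
    moreover have "(1 + C / E) * weight d Tstar = weight d Tstar + C * (weight d Tstar / E)"
      by (simp add: algebra_simps)
    ultimately show ?thesis using p1 by linarith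
  qed
  have part2: "weight d That \<le> (1 + C / E) * overlap_gamma X d t P T * weight d TX"
    if Mpos: "max_intra_mst_weight X d t P > 0"
  proof -
    define M where "M = max_intra_mst_weight X d t P"
    let ?SS = "{weight d (intra_edges t P F) | F. is_mst X d F}"
    have "?SS \<subseteq> (\<lambda>F. weight d (intra_edges t P F)) ` Pow (Pow X)"
    proof
      fix w assume "w \<in> ?SS"
      then obtain F where F: "is_mst X d F" "w = weight d (intra_edges t P F)" by auto
      have "edges_on X F" using F(1) unfolding is_mst_def spanning_tree_def by simp
      then have "F \<subseteq> Pow X" unfolding edges_on_def by auto
      then show "w \<in> (\<lambda>F. weight d (intra_edges t P F)) ` Pow (Pow X)" using F(2) by auto
    qed
    moreover have "finite ((\<lambda>F. weight d (intra_edges t P F)) ` Pow (Pow X))" using finX by simp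
    ultimately have finSS: "finite ?SS" by (rule finite_subset)
    have "?SS \<noteq> {}" using assms(8) by blast
    then have "M \<in> ?SS" unfolding M_def max_intra_mst_weight_def using finSS by (intro Max_in) auto
    then obtain T0 where T0: "is_mst X d T0" and MT0: "M = weight d (intra_edges t P T0)" by blast
    have T0s: "edges_on X T0" "connected_on X T0" using T0 unfolding is_mst_def spanning_tree_def by auto
    have finT0: "finite T0" and nnT0: "\<forall>e\<in>T0. 0 \<le> edge_weight d e" using tree_facts[OF T0s(1)] by auto
    have intra_sub: "intra_edges t P T0 \<subseteq> T0" unfolding intra_edges_def by blast
    define W where "W = weight d TX"
    have WT0: "weight d T0 = W"
    proof -
      have "spanning_tree X T0" "spanning_tree X TX" using T0 assms(8) unfolding is_mst_def by auto
      then have "weight d T0 \<le> weight d TX" "weight d TX \<le> weight d T0"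
        using T0 assms(8) unfolding is_mst_def by auto
      then show ?thesis unfolding W_def by linarith
    qed
    have diff: "weight d (T0 - intra_edges t P T0) = W - M"
      unfolding weight_def MT0 WT0[symmetric] using finT0 intra_sub by (simp add: sum_diff)
    have wT2: "weight d That \<le> E + (W - M) + C"
      using hat_bound[OF tp T0s mst] wT diff C_def by linarith
    have MW: "M \<le> W" using weight_mono[OF finT0 intra_sub nnT0] MT0 WT0 by simp
    have ME: "M \<le> E"
    proof -
      let ?H = "(T0 - intra_edges t P T0) \<union> ?Et"
      have He: "edges_on X ?H" by (rule edges_on_Un[OF edges_on_sub[OF T0s(1) Diff_subset] Ete])
      have "adj T0 \<subseteq> (adj ?H)\<^sup>*"
      proof
        fix z assume "z \<in> adj T0"
        then obtain x y where z: "z = (x,y)" "{x,y} \<in> T0" by (auto simp: adj_def)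
        show "z \<in> (adj ?H)\<^sup>*"
        proof (cases "{x,y} \<in> intra_edges t P T0")
          case True
          then obtain i where i: "i < t" "{x,y} \<subseteq> P i" unfolding intra_edges_def by blast
          have cT: "connected_on (P i) (T i)" using Tsp[OF i(1)] unfolding spanning_tree_def by simp
          have xy: "(x,y) \<in> (adj (T i))\<^sup>*" using cT i(2) unfolding connected_on_def by simp
          have "T i \<subseteq> ?H" using i(1) unfolding forest_edges_def by auto
          then have "(adj (T i))\<^sup>* \<subseteq> (adj ?H)\<^sup>*" by (rule rtrancl_mono[OF adj_mono])
          then show ?thesis using xy z(1) by (simp add: subsetD)
        next
          case False
          then have "(x,y) \<in> adj ?H" using z by (auto simp: adj_def)
          then show ?thesis using z by simp
        qed
      qed
      then have Hc: "connected_on X ?H" by (rule connected_via[OF T0s(2)])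
      have finH: "finite ?H" and nnH: "\<forall>e\<in>?H. 0 \<le> edge_weight d e" using tree_facts[OF He] by auto
      obtain S where S: "S \<subseteq> ?H" "spanning_tree X S" using extract_tree[OF finH He Hc] by blast
      have "weight d T0 \<le> weight d S" using T0 S(2) unfolding is_mst_def by simp
      then have "W \<le> weight d S" using WT0 by simp
      also have "\<dots> \<le> weight d ?H" using weight_mono[OF finH S(1) nnH] .
      also have "\<dots> \<le> weight d (T0 - intra_edges t P T0) + E"
        unfolding E_def using weight_Un_le[OF _ finEt nnH] finT0 by simp
      finally show ?thesis using diff by linarith
    qed
    have Mp: "M > 0" using Mpos M_def by simp
    define q where "q = (E + C) / M"
    have q1: "(1 + C / E) * overlap_gamma X d t P T = q"
      unfolding q_def overlap_gamma_def M_def[symmetric] E_def[symmetric] using Epos Mp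
      by (simp add: field_simps)
    have qM: "q * M = E + C" unfolding q_def using Mp by simp
    have "1 \<le> q" unfolding q_def using Mp ME Cnn by simp
    then have "0 \<le> (q - 1) * (W - M)" using MW by simp
    then have "E + (W - M) + C \<le> q * W" using qM by (simp add: algebra_simps)
    then show ?thesis using wT2 q1 W_def by simp
  qed
  show ?thesis using part1 part2 C_def E_def by simp
qed

end
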